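(* Let $n\ge0$ be an integer with $\chi_n>c^2$. Let $x_1<x_2<\dots$ be the roots of $\psi_n$ in $(1,\infty)$ and $y_1<y_2<\dots$ the roots of $\psi_n'$ in $(1,\infty)$. Then $$1<\frac{\sqrt{\chi_n}}{c}<y_1<x_1<y_2<x_2<\cdots.$$
   Context: For a real number $c>0$, let $\psi_0,\psi_1,\dots$ be the prolate spheroidal wave functions of band limit $c$: the real $L^2[-1,1]$-normalized eigenfunctions of $F_c[\varphi](x)=\int_{-1}^1\varphi(t)e^{icxt}\,dt$ with eigenvalues $\lambda_n$ ordered by $|\lambda_n|\ge|\lambda_{n+1}|$, extended to entire functions by $\lambda_n\psi_n(x)=\int_{-1}^1\psi_n(t)e^{icxt}\,dt$. $\chi_0<\chi_1<\dots$ are the positive numbers such that $\psi_n$ satisfies $(1-x^2)\psi''(x)-2x\psi'(x)+(\chi_n-c^2x^2)\psi(x)=0$ for all $x$. *)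

theory Defs
  imports "HOL-Analysis.Analysis"
begin

definition fin_fourier :: "real \<Rightarrow> (real \<Rightarrow> real) \<Rightarrow> real \<Rightarrow> complex" where
  "fin_fourier c phi x =
     integral {-1..1} (\<lambda>t. complex_of_real (phi t) * exp (\<i> * complex_of_real (c * x * t)))"

text \<open>A complete system of prolate spheroidal wave functions of band limit c:
  lam k are the eigenvalues of F_c, ordered by non-increasing modulus, Psi k the
  corresponding real L^2[-1,1]-orthonormal eigenfunctions, forming a complete system in
  L^2[-1,1] (tested against continuous functions, which are dense), each Psi k extended
  to the whole real line by lam k * Psi k x = F_c[Psi k](x).\<close>
definition pswf_system :: "real \<Rightarrow> (nat \<Rightarrow> complex) \<Rightarrow> (nat \<Rightarrow> real \<Rightarrow> real) \<Rightarrow> bool" where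
  "pswf_system c lam Psi \<longleftrightarrow>
     (\<forall>k. continuous_on UNIV (Psi k)) \<and>
     (\<forall>k x. lam k * complex_of_real (Psi k x) = fin_fourier c (Psi k) x) \<and>
     (\<forall>j k. integral {-1..1} (\<lambda>t. Psi j t * Psi k t) = (if j = k then 1 else 0)) \<and>
     (\<forall>k. norm (lam k) \<ge> norm (lam (Suc k))) \<and>
     (\<forall>f. continuous_on {-1..1} f \<and> (\<forall>k. integral {-1..1} (\<lambda>t. f t * Psi k t) = 0)
          \<longrightarrow> (\<forall>t\<in>{-1..1}. f t = (0::real)))"

definition prolate_ode :: "real \<Rightarrow> real \<Rightarrow> (real \<Rightarrow> real) \<Rightarrow> bool" where
  "prolate_ode c chi psi \<longleftrightarrow>
     (\<forall>x. (1 - x\<^sup>2) * deriv (deriv psi) x - 2 * x * deriv psi x + (chi - c\<^sup>2 * x\<^sup>2) * psi x = 0)"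

end

theory Submission
  imports Defs
begin

locale ode_setup =
  fixes c chi :: real and f f1 f2 :: "real \<Rightarrow> real"
  assumes c: "c > 0" and chi: "chi > c^2"
  and d1: "\<And>x. (f has_real_derivative f1 x) (at x)"
  and d2: "\<And>x. (f1 has_real_derivative f2 x) (at x)"
  and ode: "\<And>x. (1 - x^2) * f2 x - 2*x*f1 x + (chi - c^2*x^2) * f x = 0"
begin

lemma r_pos: "t^2 \<le> 1 \<Longrightarrow> chi - c^2*t^2 > 0"
proof -
  assume "t^2 \<le> 1"
  hence "c^2*t^2 \<le> c^2" using c by (simp add: mult_left_le)
  thus ?thesis using chi by linarith
qed

lemma alg1: fixes A B r p t C :: real assumes "r \<noteq> 0"
  shows "2*A*B + ((2*t*B^2 - 2*r*A*B)*r - (-2*C*t)*(p*B^2))/(r^Suc (Suc 0)) = 2*t*B^2/r + 2*C*t*p*B^2/r^2"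
  using assms by (simp add: field_simps power2_eq_square)

lemma G_deriv:
  assumes "t^2 \<le> 1"
  shows "((\<lambda>t. f t ^2 + (1-t^2)*f1 t^2 / (chi - c^2*t^2)) has_real_derivative
     (2*t*f1 t^2/(chi - c^2*t^2) + 2*c^2*t*(1-t^2)*f1 t^2/(chi - c^2*t^2)^2)) (at t)"
proof -
  have r: "chi - c^2*t^2 \<noteq> 0" using r_pos[of t] assms by simp
  have o: "(1 - t^2) * f2 t = 2*t*f1 t - (chi - c^2*t^2) * f t" using ode[of t] by linarith
  have hN: "((\<lambda>t. (1-t^2)*f1 t^2) has_real_derivative (2*t*f1 t^2 - 2*(chi - c^2*t^2)*f t*f1 t)) (at t)"
    apply (rule derivative_eq_intros refl d1 d2)+
    apply (simp add: power2_eq_square)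
    using o by algebra
  have hr: "((\<lambda>t. chi - c^2*t^2) has_real_derivative (-2*c^2*t)) (at t)"
    by (rule derivative_eq_intros refl)+ simp
  have hf: "((\<lambda>t. f t ^2) has_real_derivative (2*f t*f1 t)) (at t)"
    by (rule derivative_eq_intros refl d1)+ simp
  note hQ = DERIV_quotient[OF hN hr r]
  show ?thesis
    apply (rule DERIV_cong[OF DERIV_add[OF hf hQ]])
    by (rule alg1[OF r])
qed

lemma contf: "continuous_on S f" 
  by (meson DERIV_isCont continuous_at_imp_continuous_on d1)
lemma contf1: "continuous_on S f1" 
  by (meson DERIV_isCont continuous_at_imp_continuous_on d2)

lemma alg2: fixes A B C t :: real assumes "t \<le> 0" "t^2 \<le> 1" "C \<ge> 0" "r \<ge> 0"
  shows "0 \<le> - 2 * t * (r + C*(1-t^2)) * A^2" 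
proof -
  have h0: "r + C*(1-t^2) \<ge> 0" using assms by simp
  have h1: "- 2 * t \<ge> 0" using assms by simp
  show ?thesis using mult_nonneg_nonneg[OF mult_nonneg_nonneg[OF h1 h0] zero_le_power2[of A]] by simp
qed

lemma E_deriv:
  shows "((\<lambda>t. ((1-t^2)*f1 t)^2 + (1-t^2)*(chi - c^2*t^2)*f t^2) has_real_derivative
     (- 2 * t * ((chi - c^2*t^2) + c^2*(1-t^2)) * f t^2)) (at t)"
proof -
  define u where "u = (\<lambda>t. (1-t^2)*f1 t)"
  have o: "(1 - t^2) * f2 t = 2*t*f1 t - (chi - c^2*t^2) * f t" using ode[of t] by linarith
  have hu: "(u has_real_derivative (-(chi - c^2*t^2)*f t)) (at t)" unfolding u_def
    apply (rule derivative_eq_intros refl d1 d2)+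
    apply (simp add: power2_eq_square)
    using o by algebra
  have "((\<lambda>t. (u t)^2 + (1-t^2)*(chi - c^2*t^2)*f t^2) has_real_derivative
     (- 2 * t * ((chi - c^2*t^2) + c^2*(1-t^2)) * f t^2)) (at t)"
    apply (rule derivative_eq_intros refl d1 hu)+
    apply (simp add: u_def power2_eq_square)
    by algebra
  thus ?thesis unfolding u_def .
qed

lemma zero_case_pos:
  assumes f1z: "f 1 = 0" and x: "0 \<le> x" "x \<le> 1"
  shows "f x = 0"
proof -
  define G where "G = (\<lambda>t. f t ^2 + (1-t^2)*f1 t^2 / (chi - c^2*t^2))"
  have "G x \<le> G 1"
  proof (rule DERIV_nonneg_imp_nondecreasing[OF x(2)])
    fix t assume t: "x \<le> t" "t \<le> 1"
    have t2: "t^2 \<le> 1" using t x by (simp add: power_le_one)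
    have r: "chi - c^2*t^2 > 0" using r_pos[OF t2] .
    have "0 \<le> 2*t*f1 t^2/(chi - c^2*t^2) + 2*c^2*t*(1-t^2)*f1 t^2/(chi - c^2*t^2)^2"
      using r t x t2 by (intro add_nonneg_nonneg divide_nonneg_nonneg mult_nonneg_nonneg) auto
    thus "\<exists>y. (G has_real_derivative y) (at t) \<and> 0 \<le> y"
      using G_deriv[OF t2] unfolding G_def by blast
  qed
  moreover have "G 1 = 0" unfolding G_def using f1z by simp
  moreover have "G x \<ge> f x ^2"
  proof -
    have x2: "x^2 \<le> 1" using x by (simp add: power_le_one)
    have "(1-x^2)*f1 x^2 / (chi - c^2*x^2) \<ge> 0" using r_pos[OF x2] x2 by simp
    thus ?thesis unfolding G_def by simp
  qed
  ultimately have "f x ^2 \<le> 0" by linarith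
  thus ?thesis by simp
qed

lemma zero_case_f1:
  assumes f1z: "f 1 = 0"
  shows "f1 0 = 0"
proof -
  define G where "G = (\<lambda>t. f t ^2 + (1-t^2)*f1 t^2 / (chi - c^2*t^2))"
  have "G 0 \<le> G 1"
  proof (rule DERIV_nonneg_imp_nondecreasing[of 0 1 G])
    fix t :: real assume t: "0 \<le> t" "t \<le> 1"
    have t2: "t^2 \<le> 1" using t by (simp add: power_le_one)
    have r: "chi - c^2*t^2 > 0" using r_pos[OF t2] .
    have "0 \<le> 2*t*f1 t^2/(chi - c^2*t^2) + 2*c^2*t*(1-t^2)*f1 t^2/(chi - c^2*t^2)^2"
      using r t t2 by (intro add_nonneg_nonneg divide_nonneg_nonneg mult_nonneg_nonneg) auto
    thus "\<exists>y. (G has_real_derivative y) (at t) \<and> 0 \<le> y"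
      using G_deriv[OF t2] unfolding G_def by blast
  qed simp
  moreover have "G 1 = 0" unfolding G_def using f1z by simp
  moreover have "G 0 = f1 0 ^2 / chi" unfolding G_def using zero_case_pos[OF f1z, of 0] by simp
  moreover have "chi > 0" using chi c by (meson less_trans zero_less_power)
  ultimately have "f1 0 ^2 \<le> 0" by (simp add: divide_le_0_iff)
  thus ?thesis by simp
qed

lemma zero_case:
  assumes f1z: "f 1 = 0" and x: "-1 < x" "x < 1"
  shows "f x = 0"
proof (cases "x \<ge> 0")
  case True thus ?thesis using zero_case_pos[OF f1z] x by simp
next
  case False
  define E where "E = (\<lambda>t. ((1-t^2)*f1 t)^2 + (1-t^2)*(chi - c^2*t^2)*f t^2)"
  have "E x \<le> E 0"
  proof (rule DERIV_nonneg_imp_nondecreasing[of x 0 E])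
    fix t :: real assume t: "x \<le> t" "t \<le> 0"
    have "(-t)^2 \<le> 1" using t x by (intro power_le_one) auto
    hence t2: "t^2 \<le> 1" by simp
    have r: "chi - c^2*t^2 > 0" using r_pos[OF t2] .
    have "0 \<le> - 2 * t * ((chi - c^2*t^2) + c^2*(1-t^2)) * f t^2"
      using alg2[of t "c^2" "chi - c^2*t^2" "f t"] t t2 r by simp
    thus "\<exists>y. (E has_real_derivative y) (at t) \<and> 0 \<le> y"
      using E_deriv[of t] unfolding E_def by blast
  qed (use False in simp)
  moreover have "E 0 = 0" unfolding E_def using zero_case_pos[OF f1z, of 0] zero_case_f1[OF f1z] by simp
  moreover have "E x \<ge> (1-x^2)*(chi - c^2*x^2)*f x^2" unfolding E_def by simp
  moreover have "(1-x^2)*(chi - c^2*x^2) > 0"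
  proof -
    have "\<bar>x\<bar> < 1" using x by simp
    hence "x^2 < 1" by (simp add: abs_square_less_1)
    thus ?thesis using r_pos[of x] by simp
  qed
  ultimately have "(1-x^2)*(chi - c^2*x^2)*f x^2 \<le> 0" "(1-x^2)*(chi - c^2*x^2) > 0" by linarith+
  hence "f x ^2 \<le> 0" using mult_le_cancel_left_pos[of "(1-x^2)*(chi - c^2*x^2)" "f x^2" 0] by simp
  thus ?thesis by simp
qed

lemma chi_pos: "chi > 0" using chi c by (meson less_trans zero_less_power)

definition "sc = sqrt chi / c"

lemma sc_gt1: "sc > 1"
proof -
  have "sqrt chi > sqrt (c^2)" using chi by (simp only: real_sqrt_less_iff)
  thus ?thesis unfolding sc_def using c by simp
qed

lemma sc_sq: "c^2 * sc^2 = chi"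
  unfolding sc_def using c chi_pos by (simp add: power_divide)

lemma lt_sc: "0 \<le> x \<Longrightarrow> x < sc \<Longrightarrow> c^2*x^2 < chi"
proof -
  assume "0 \<le> x" "x < sc"
  hence "x^2 < sc^2" by (simp add: power_strict_mono)
  hence "c^2*x^2 < c^2* sc^2" using c by simp
  thus ?thesis using sc_sq by simp
qed

lemma gt_sc: "sc < x \<Longrightarrow> c^2*x^2 > chi"
proof -
  assume "sc < x"
  hence "x^2 > sc^2" using sc_gt1 by (simp add: power_strict_mono)
  hence "c^2*x^2 > c^2* sc^2" using c by simp
  thus ?thesis using sc_sq by simp
qed

lemma hu2: "((\<lambda>t. (t^2-1)*f1 t) has_real_derivative ((chi - c^2*t^2)*f t)) (at t)"
proof -
  have o: "(1 - t^2) * f2 t = 2*t*f1 t - (chi - c^2*t^2) * f t" using ode[of t] by linarith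
  show ?thesis
    apply (rule derivative_eq_intros refl d1 d2)+
    apply (simp add: power2_eq_square)
    using o by algebra
qed

lemma mvt: assumes "a < b" "\<And>x. (g has_real_derivative g' x) (at x)"
  shows "\<exists>z. a < z \<and> z < b \<and> g b - g a = (b - a) * g' z"
proof -
  have "continuous_on {a..b} g" 
    by (meson DERIV_isCont assms(2) continuous_at_imp_continuous_on)
  moreover have "\<And>x. g differentiable (at x)" using assms(2) real_differentiable_def by blast
  ultimately obtain l z where "a < z" "z < b" "DERIV g z :> l" "g b - g a = (b - a) * l"
    using MVT[OF assms(1)] by blast
  thus ?thesis using DERIV_unique[OF assms(2)[of z]] by metis
qed


lemma alg3: fixes A B S K a p r P Q :: real
  assumes "A \<noteq> 0" "0 \<le> p" "p \<le> P" "Q \<le> - r"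
  shows "((2*S*(a*K)*(p*B) + (r*A)*S^2)*A - B*(S^2*(p*B)))/A^Suc(Suc 0) \<le> P*a^2*K^2 - Q*S^2"
proof -
  have e: "((2*S*(a*K)*(p*B) + (r*A)*S^2)*A - B*(S^2*(p*B)))/A^Suc(Suc 0)
        = p*a^2*K^2 + r*S^2 - p*(a*K - S*B/A)^2" using assms(1) 
    by (simp add: field_simps power2_eq_square)
  have "p*(a*K - S*B/A)^2 \<ge> 0" using assms by simp
  moreover have "p*a^2*K^2 \<le> P*a^2*K^2" using assms by (simp add: mult_right_mono)
  moreover have "r*S^2 \<le> - Q*S^2" using mult_right_mono[of r "-Q" "S^2"] assms by simp
  ultimately show ?thesis unfolding e by simp
qed

lemma alg4a: fixes X Q C S :: real shows "(X-Q)/2*(C+S) + (X+Q)/2*(C-S) = X*C - Q*S"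
  by (simp add: field_simps)

lemma alg4: fixes a th P Q :: real assumes "a \<noteq> 0"
  shows "(P*a^2-Q)/2 + (P*a^2+Q)/(4*a) * (cos(2*th) * (2*a)) = P*a^2*cos th^2 - Q* sin th^2"
proof -
  have "(P*a^2-Q)/2 + (P*a^2+Q)/(4*a) * (cos(2*th) * (2*a)) = (P*a^2-Q)/2 + (P*a^2+Q)/2 * cos(2*th)"
    using assms by (simp add: field_simps)
  also have "\<dots> = (P*a^2-Q)/2 * (cos th^2 + sin th^2) + (P*a^2+Q)/2 * (cos th^2 - sin th^2)"
    by (simp add: cos_double)
  also have "\<dots> = P*a^2*cos th^2 - Q* sin th^2" by (rule alg4a)
  finally show ?thesis .
qed

lemma key_ineq: fixes T w :: real assumes "w > 0" "T \<ge> 3*pi + 2*w"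
  shows "(T + 3*pi)^2/9 < T^2 - w^2"
proof -
  have p: "pi > 0" by simp
  have "T + 3*pi \<le> 2*T - 2*w" using assms by simp
  moreover have "0 \<le> T + 3*pi" using assms pi_gt_zero by linarith
  ultimately have "(T + 3*pi)^2 \<le> (2*T - 2*w)^2" by (simp add: power_mono)
  moreover have "(2*T - 2*w)^2 < 9*(T^2 - w^2)"
  proof -
    have "T > 2*w" using assms pi_gt_zero by linarith
    hence "T^2 > (2*w)^2" using assms by (intro power_strict_mono) auto
    hence "5*T^2 > 20*w^2" by (simp add: power_mult_distrib)
    moreover have "T*w \<ge> 0" using assms \<open>T > 2*w\<close> by simp
    moreover have "9*(T^2 - w^2) - (2*T-2*w)^2 = 5*T^2 + 8*(T*w) - 13*w^2" 
      by (simp add: power2_eq_square algebra_simps)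
    moreover have "w^2 \<ge> 0" by simp
    ultimately show ?thesis by linarith
  qed
  ultimately show ?thesis by simp
qed

lemma osc: "\<exists>z>b. f z = 0"
proof (rule ccontr)
  assume H0: "\<not> (\<exists>z>b. f z = 0)"
  define \<alpha> where "\<alpha> = max b 0 + (3*pi + 2* sqrt chi)/c"
  define \<beta> where "\<beta> = \<alpha> + 3*pi/c"
  define a where "a = c/3"
  define P where "P = \<beta>^2"
  define Q where "Q = c^2*\<alpha>^2 - chi"
  have sp: "sqrt chi > 0" using chi_pos by simp
  have pp: "pi > 0" by simp
  have d: "(3*pi + 2* sqrt chi)/c > 0" using sp c pi_gt_zero by (intro divide_pos_pos add_pos_pos) auto
  have "max b 0 \<ge> b" "max b 0 \<ge> 0" by auto
  hence al: "\<alpha> > b" "\<alpha> > 0" unfolding \<alpha>_def using d by linarith+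
  have "c * ((3*pi + 2* sqrt chi)/c) = 3*pi + 2* sqrt chi" using c by simp
  hence "c*\<alpha> = c*max b 0 + (3*pi + 2* sqrt chi)" unfolding \<alpha>_def  
    by (simp only: distrib_left)
  moreover have "c*max b 0 \<ge> 0" using c by simp
  ultimately have Tal: "c*\<alpha> \<ge> 3*pi + 2* sqrt chi" by linarith
  have al1: "\<alpha> \<ge> 1"
  proof -
    have "(3*pi + 2* sqrt chi)/c \<ge> 2* sc" unfolding sc_def using c pi_gt_zero by (simp add: divide_right_mono)
    thus ?thesis unfolding \<alpha>_def using sc_gt1 \<open>max b 0 \<ge> 0\<close> by linarith
  qed
  have ab: "\<alpha> < \<beta>" unfolding \<beta>_def using c by simp
  have a0: "a > 0" unfolding a_def using c by simp
  have key: "P*a^2 < Q"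
  proof -
    have "(c*\<alpha> + 3*pi)^2/9 < (c*\<alpha>)^2 - (sqrt chi)^2" by (rule key_ineq[OF sp Tal])
    moreover have "P*a^2 = (c*\<alpha> + 3*pi)^2/9" unfolding P_def a_def \<beta>_def using c
      by (simp add: field_simps power2_eq_square)
    moreover have "Q = (c*\<alpha>)^2 - (sqrt chi)^2" unfolding Q_def using chi_pos by (simp add: power_mult_distrib)
    ultimately show ?thesis by simp
  qed
  have nz: "\<And>t. \<alpha> \<le> t \<Longrightarrow> f t \<noteq> 0" using H0 al by force
  define W where "W = (\<lambda>t. (sin(a*(t-\<alpha>)))^2 * ((t^2-1)*f1 t) / f t)"
  define Hf where "Hf = (\<lambda>t. (P*a^2-Q)/2 * t + (P*a^2+Q)/(4*a) * sin(2*(a*(t-\<alpha>))))"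
  have "Hf \<alpha> - W \<alpha> \<le> Hf \<beta> - W \<beta>"
  proof (rule DERIV_nonneg_imp_nondecreasing[of \<alpha> \<beta> "\<lambda>t. Hf t - W t"])
    show "\<alpha> \<le> \<beta>" using ab by simp
    fix t assume t: "\<alpha> \<le> t" "t \<le> \<beta>"
    have hvv: "((\<lambda>t. (sin(a*(t-\<alpha>)))^2) has_real_derivative 2* sin(a*(t-\<alpha>))*(a*cos(a*(t-\<alpha>)))) (at t)"
      by (rule derivative_eq_intros refl)+ simp
    note hvu = DERIV_mult[OF hvv hu2[of t]]
    note hW = DERIV_quotient[OF hvu d1[of t] nz[OF t(1)]]
    have hH: "(Hf has_real_derivative (P*a^2*cos (a*(t-\<alpha>))^2 - Q* sin (a*(t-\<alpha>))^2)) (at t)"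
      unfolding Hf_def
      apply (rule derivative_eq_intros refl)+
      using alg4[where a=a and th="a*(t-\<alpha>)" and P=P and Q=Q] a0 by (simp add: field_simps)
    have "t \<ge> 1" using t al1 by linarith
    hence t1: "t^2 - 1 \<ge> 0" by (simp add: one_le_power)
    have "t^2 \<le> \<beta>^2" using t al by (intro power_mono) auto
    hence tP: "t^2 - 1 \<le> P" unfolding P_def by simp
    have "\<alpha>^2 \<le> t^2" using t al by (intro power_mono) auto
    hence "c^2*\<alpha>^2 \<le> c^2*t^2" by (simp add: mult_left_mono)
    hence tQ: "Q \<le> - (chi - c^2*t^2)" unfolding Q_def by simp
    have le: "((2* sin(a*(t-\<alpha>))*(a*cos(a*(t-\<alpha>))) * ((t^2-1)*f1 t) + ((chi - c^2*t^2)*f t)*(sin(a*(t-\<alpha>)))^2)*f t - f1 t*((sin(a*(t-\<alpha>)))^2*((t^2-1)*f1 t)))/f t^Suc(Suc 0)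
      \<le> P*a^2*cos (a*(t-\<alpha>))^2 - Q* sin (a*(t-\<alpha>))^2"
      by (rule alg3[OF nz[OF t(1)] t1 tP tQ])
    show "\<exists>y. ((\<lambda>t. Hf t - W t) has_real_derivative y) (at t) \<and> 0 \<le> y"
      using DERIV_diff[OF hH hW] le unfolding W_def by (intro exI conjI) (assumption, simp)
  qed
  moreover have "W \<alpha> = 0" unfolding W_def by simp
  moreover have "W \<beta> = 0" 
  proof -
    have "a*(\<beta>-\<alpha>) = pi" unfolding a_def \<beta>_def using c by simp
    thus ?thesis unfolding W_def by simp
  qed
  moreover have "Hf \<beta> - Hf \<alpha> = (P*a^2-Q)/2 * (\<beta> - \<alpha>)"
  proof -
    have "a*(\<beta>-\<alpha>) = pi" unfolding a_def \<beta>_def using c by simp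
    hence "sin(2*(a*(\<beta>-\<alpha>))) = 0" by simp
    hence "Hf \<beta> = (P*a^2-Q)/2 * \<beta>" unfolding Hf_def by simp
    moreover have "Hf \<alpha> = (P*a^2-Q)/2 * \<alpha>" unfolding Hf_def by simp
    ultimately show ?thesis by (simp add: right_diff_distrib)
  qed
  ultimately have "(P*a^2-Q)/2 * (\<beta> - \<alpha>) \<ge> 0" by simp
  hence "P*a^2-Q \<ge> 0" using ab by (simp add: zero_le_mult_iff)
  thus False using key by simp
qed

end

locale ode_pos = ode_setup +
  assumes pos: "f 1 > 0"
begin

lemma f1_1: "f1 1 > 0"
proof -
  have "f1 1 = (chi - c^2) * f 1 / 2" using ode[of 1] by simp
  moreover have "(chi - c^2) * f 1 > 0" using pos chi by simp
  ultimately show ?thesis by simp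
qed

lemma f1_pos_sc: assumes x: "1 \<le> x" "x \<le> sc" shows "f1 x > 0"
proof (rule ccontr)
  assume "\<not> f1 x > 0"
  define S where "S = {1..x} \<inter> {t. f1 t \<le> 0}"
  have "closed {t. f1 t \<le> 0}" by (rule closed_Collect_le) (auto intro: contf1)
  hence cS: "closed S" unfolding S_def by auto
  have neS: "S \<noteq> {}" unfolding S_def using \<open>\<not> f1 x > 0\<close> x by auto
  have bS: "bdd_below S" unfolding S_def by auto
  define m where "m = Inf S"
  have mS: "m \<in> S" unfolding m_def using closed_contains_Inf[OF neS bS cS] .
  have below: "\<And>t. 1 \<le> t \<Longrightarrow> t < m \<Longrightarrow> f1 t > 0"
  proof (rule ccontr)
    fix t assume t: "1 \<le> t" "t < m" "\<not> f1 t > 0"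
    have "t \<in> S" unfolding S_def using t mS unfolding S_def by auto
    hence "m \<le> t" unfolding m_def using bS by (simp add: cInf_lower)
    thus False using t by simp
  qed
  have m1: "m > 1" using mS f1_1 unfolding S_def by (cases "m = 1") auto
  have mx: "m \<le> x" using mS unfolding S_def by auto
  obtain z where z: "1 < z" "z < m" "(m^2-1)*f1 m - (1^2-1)*f1 1 = (m - 1) * ((chi - c^2*z^2)*f z)"
    using mvt[OF m1, of "\<lambda>t. (t^2-1)*f1 t", OF hu2] by blast
  have "f 1 < f z"
  proof (rule DERIV_pos_imp_increasing[OF z(1)])
    fix t assume "1 \<le> t" "t \<le> z"
    thus "\<exists>y. (f has_real_derivative y) (at t) \<and> 0 < y" using below[of t] z d1[of t] by auto
  qed
  hence fz: "f z > 0" using pos by simp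
  have "c^2*z^2 < chi" using lt_sc[of z] z mx x by simp
  hence "(m^2-1)*f1 m > 0" using z(3) fz m1 by simp
  moreover have "(m^2-1)*f1 m \<le> 0" 
  proof -
    have "m^2 - 1 > 0" using m1 by (simp add: one_less_power)
    thus ?thesis using mS unfolding S_def by (simp add: mult_nonneg_nonpos)
  qed
  ultimately show False by simp
qed

lemma f_pos_sc: assumes x: "1 \<le> x" "x \<le> sc" shows "f x > 0"
proof (cases "x = 1")
  case True thus ?thesis using pos by simp
next
  case False
  hence x1: "1 < x" using x by simp
  have "f 1 < f x"
  proof (rule DERIV_pos_imp_increasing[OF x1])
    fix t assume "1 \<le> t" "t \<le> x"
    thus "\<exists>y. (f has_real_derivative y) (at t) \<and> 0 < y" using f1_pos_sc[of t] x d1[of t] by auto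
  qed
  thus ?thesis using pos by simp
qed

lemma E2_deriv:
  "((\<lambda>t. ((t^2-1)*f1 t)^2 + (t^2-1)*(c^2*t^2 - chi)*f t^2) has_real_derivative
     (2*t*(c^2*t^2 - chi) + 2*c^2*t*(t^2-1)) * f t^2) (at t)"
proof -
  define u where "u = (\<lambda>t. (t^2-1)*f1 t)"
  have hu: "(u has_real_derivative ((chi - c^2*t^2)*f t)) (at t)" unfolding u_def by (rule hu2)
  have "((\<lambda>t. (u t)^2 + (t^2-1)*(c^2*t^2 - chi)*f t^2) has_real_derivative
     (2*t*(c^2*t^2 - chi) + 2*c^2*t*(t^2-1)) * f t^2) (at t)"
    apply (rule derivative_eq_intros refl d1 hu)+
    apply (simp add: u_def power2_eq_square)
    by algebra
  thus ?thesis unfolding u_def .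
qed

lemma E2_pos: assumes "sc \<le> x" 
  shows "((x^2-1)*f1 x)^2 + (x^2-1)*(c^2*x^2 - chi)*f x^2 > 0"
proof -
  define E where "E = (\<lambda>t. ((t^2-1)*f1 t)^2 + (t^2-1)*(c^2*t^2 - chi)*f t^2)"
  have "E sc \<le> E x"
  proof (rule DERIV_nonneg_imp_nondecreasing[of sc x E])
    fix t :: real assume t: "sc \<le> t" "t \<le> x"
    have t1: "t \<ge> 1" using t sc_gt1 by simp
    have q: "c^2*t^2 - chi \<ge> 0" using gt_sc[of t] t by (cases "t = sc") (auto simp: sc_sq)
    have "t^2 \<ge> 1" using t1 by (simp add: one_le_power)
    hence "0 \<le> (2*t*(c^2*t^2 - chi) + 2*c^2*t*(t^2-1)) * f t^2"
      using q t1 by (intro mult_nonneg_nonneg add_nonneg_nonneg) auto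
    thus "\<exists>y. (E has_real_derivative y) (at t) \<and> 0 \<le> y"
      using E2_deriv[of t] unfolding E_def by blast
  qed (use assms in simp)
  moreover have "E sc > 0"
  proof -
    have "sc^2 - 1 > 0" using sc_gt1 by (simp add: one_less_power)
    moreover have "f1 sc > 0" using f1_pos_sc sc_gt1 by simp
    ultimately show ?thesis unfolding E_def using sc_sq by simp
  qed
  ultimately show ?thesis unfolding E_def by simp
qed

lemma no_common: assumes "x > 1" "f x = 0" "f1 x = 0" shows False
proof (cases "x \<le> sc")
  case True thus ?thesis using f_pos_sc[of x] assms by simp
next
  case False thus ?thesis using E2_pos[of x] assms by simp
qed

end



lemma loc_nz: fixes g :: "real \<Rightarrow> real"
  assumes g: "(g has_real_derivative d) (at x)" and d: "d \<noteq> 0"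
  shows "\<exists>\<delta>>0. \<forall>y. y \<noteq> x \<and> \<bar>y - x\<bar> < \<delta> \<longrightarrow> g y \<noteq> g x"
proof (cases "d > 0")
  case True
  obtain d1 where d1: "d1 > 0" "\<forall>h>0. h < d1 \<longrightarrow> g x < g (x + h)" using DERIV_pos_inc_right[OF g True] by blast
  obtain d2 where d2: "d2 > 0" "\<forall>h>0. h < d2 \<longrightarrow> g (x - h) < g x" using DERIV_pos_inc_left[OF g True] by blast
  show ?thesis
  proof (intro exI[of _ "min d1 d2"] conjI allI impI)
    show "min d1 d2 > 0" using d1 d2 by simp
    fix y assume y: "y \<noteq> x \<and> \<bar>y - x\<bar> < min d1 d2"
    show "g y \<noteq> g x"
    proof (cases "y > x")
      case True thus ?thesis using d1(2)[rule_format, of "y - x"] y by auto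
    next
      case False thus ?thesis using d2(2)[rule_format, of "x - y"] y by auto
    qed
  qed
next
  case False
  hence dn: "d < 0" using d by simp
  obtain d1 where d1: "d1 > 0" "\<forall>h>0. h < d1 \<longrightarrow> g x > g (x + h)" using DERIV_neg_dec_right[OF g dn] by blast
  obtain d2 where d2: "d2 > 0" "\<forall>h>0. h < d2 \<longrightarrow> g (x - h) > g x" using DERIV_neg_dec_left[OF g dn] by blast
  show ?thesis
  proof (intro exI[of _ "min d1 d2"] conjI allI impI)
    show "min d1 d2 > 0" using d1 d2 by simp
    fix y assume y: "y \<noteq> x \<and> \<bar>y - x\<bar> < min d1 d2"
    show "g y \<noteq> g x"
    proof (cases "y > x")
      case True thus ?thesis using d1(2)[rule_format, of "y - x"] y by auto
    next
      case False thus ?thesis using d2(2)[rule_format, of "x - y"] y by auto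
    qed
  qed
qed

lemma ivt_zero: fixes g :: "real \<Rightarrow> real"
  assumes "continuous_on {a..b} g" "a \<le> b" "g a * g b \<le> 0"
  shows "\<exists>z. a \<le> z \<and> z \<le> b \<and> g z = 0"
proof -
  consider "g a = 0" | "g a < 0" | "g a > 0" by linarith
  thus ?thesis
  proof cases
    case 1 thus ?thesis using assms by auto
  next
    case 2
    hence "g b \<ge> 0" using assms(3) by (simp add: mult_le_0_iff)
    thus ?thesis using IVT'[of g a 0 b] 2 assms by auto
  next
    case 3
    hence "g b \<le> 0" using assms(3) by (simp add: mult_le_0_iff)
    thus ?thesis using IVT2'[of g b 0 a] 3 assms by auto
  qed
qed

context ode_pos begin

lemma crit_props: assumes "x > 1" "f1 x = 0" shows "x > sc" "f x * f2 x < 0"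
proof -
  show xs: "x > sc"
  proof (rule ccontr)
    assume "\<not> x > sc" thus False using f1_pos_sc[of x] assms by simp
  qed
  have fx: "f x \<noteq> 0" using no_common assms by blast
  have e: "(x^2 - 1) * f2 x = (chi - c^2*x^2) * f x" using ode[of x] assms(2) by (simp add: algebra_simps)
  have "(x^2 - 1) * (f x * f2 x) = ((x^2 - 1) * f2 x) * f x" by (simp add: algebra_simps)
  also have "\<dots> = (chi - c^2*x^2) * f x * f x" using e by simp
  also have "\<dots> = (chi - c^2*x^2) * f x^2" by (simp add: power2_eq_square)
  finally have "(x^2 - 1) * (f x * f2 x) = (chi - c^2*x^2) * f x^2" .
  moreover have "(chi - c^2*x^2) * f x^2 < 0" using gt_sc[OF xs] fx by (simp add: mult_neg_pos)
  moreover have "x^2 - 1 > 0" using assms by (simp add: one_less_power)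
  ultimately have "(x^2 - 1) * (f x * f2 x) < (x^2 - 1) * 0" "x^2 - 1 > 0" by simp_all
  thus "f x * f2 x < 0" using mult_less_cancel_left_pos by blast
qed

lemma crit_iso: assumes "x > 1" "f1 x = 0" shows "\<exists>\<delta>>0. \<forall>y. y \<noteq> x \<and> \<bar>y - x\<bar> < \<delta> \<longrightarrow> f1 y \<noteq> 0"
proof -
  have "f2 x \<noteq> 0" using crit_props(2)[OF assms] by auto
  thus ?thesis using loc_nz[OF d2[of x]] assms(2) by simp
qed

definition "Cset = {t. 1 < t \<and> f1 t = 0}"

lemma closed_C: "closed Cset"
proof -
  have "Cset = {t. 1 \<le> t} \<inter> {t. f1 t = 0}" unfolding Cset_def 
    by (auto, metis f1_1 less_eq_real_def less_irrefl)
  moreover have "closed {t. f1 t = 0}" by (rule closed_Collect_eq) (auto intro: contf1)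
  moreover have "closed {t::real. 1 \<le> t}" by (simp add: closed_Collect_le)
  ultimately show ?thesis by auto
qed

lemma C_unbounded: "\<exists>y\<in>Cset. y > b"
proof -
  obtain z1 where z1: "z1 > max b 1" "f z1 = 0" using osc by blast
  obtain z2 where z2: "z2 > z1" "f z2 = 0" using osc by blast
  obtain z where z: "z1 < z" "z < z2" "f z2 - f z1 = (z2 - z1) * f1 z" using mvt[OF z2(1) d1] by blast
  have "f1 z = 0" using z z1 z2 by simp
  thus ?thesis unfolding Cset_def using z z1 by (intro bexI[of _ z]) auto
qed

lemma next_C: assumes "a \<ge> 1"
  shows "Inf (Cset \<inter> {a<..}) \<in> Cset \<and> a < Inf (Cset \<inter> {a<..}) \<and> (\<forall>t\<in>Cset. a < t \<longrightarrow> Inf (Cset \<inter> {a<..}) \<le> t)"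
proof -
  define S where "S = Cset \<inter> {a<..}"
  define m where "m = Inf S"
  have ne: "S \<noteq> {}" unfolding S_def using C_unbounded[of a] by auto
  have bb: "bdd_below S" unfolding S_def by (rule bdd_belowI[of _ a]) auto
  have "m \<in> closure S" unfolding m_def by (rule closure_contains_Inf[OF ne bb])
  moreover have "closure S \<subseteq> closure Cset" unfolding S_def by (rule closure_mono) auto
  moreover have "closure S \<subseteq> closure {a<..}" unfolding S_def by (rule closure_mono) auto
  ultimately have mC: "m \<in> Cset" "m \<ge> a" using closed_C by auto
  have low: "\<forall>t\<in>Cset. a < t \<longrightarrow> m \<le> t" unfolding m_def S_def
    using bb unfolding S_def by (auto intro: cInf_lower)
  have "m \<noteq> a"
  proof
    assume ma: "m = a"
    hence "a > 1" "f1 a = 0" using mC unfolding Cset_def by auto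
    then obtain \<delta> where \<delta>: "\<delta> > 0" "\<forall>y. y \<noteq> a \<and> \<bar>y - a\<bar> < \<delta> \<longrightarrow> f1 y \<noteq> 0" 
      using crit_iso by blast
    have "Inf S < a + \<delta>" using ma \<delta> unfolding m_def by simp
    then obtain t where t: "t \<in> S" "t < a + \<delta>" using cInf_lessD[OF ne] by blast
    thus False using \<delta> unfolding S_def Cset_def by auto
  qed
  thus ?thesis using mC low unfolding m_def S_def by auto
qed


lemma between_sign: assumes A: "A \<in> Cset" and B: "B \<in> Cset" and AB: "A < B"
  and no: "\<And>t. A < t \<Longrightarrow> t < B \<Longrightarrow> f1 t \<noteq> 0"
  shows "f A * f B < 0"
proof -
  define m where "m = (A+B)/2"
  have m: "A < m" "m < B" unfolding m_def using AB by auto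
  have same: "f1 t * f1 m > 0" if t: "A < t" "t < B" for t
  proof (rule ccontr)
    assume "\<not> f1 t * f1 m > 0"
    hence pr: "f1 (min t m) * f1 (max t m) \<le> 0" by (cases "t \<le> m") (auto simp: min_def max_def mult.commute)
    have mm: "min t m \<le> max t m" by simp
    obtain z where z: "min t m \<le> z" "z \<le> max t m" "f1 z = 0"
      using ivt_zero[OF contf1 mm pr] by blast
    have "A < z" "z < B" using z t m by auto
    thus False using no z by blast
  qed
  have A1: "A > 1" "f1 A = 0" and B1: "B > 1" "f1 B = 0" using A B unfolding Cset_def by auto
  have pA: "f A * f2 A < 0" using crit_props(2)[OF A1] .
  have pB: "f B * f2 B < 0" using crit_props(2)[OF B1] .
  have hA: "\<exists>h>0. h < d \<and> A < A + h \<and> A + h < B" if "d > 0" for d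
    using AB that by (intro exI[of _ "min (d/2) ((B-A)/2)"]) (auto simp: min_def field_simps)
  have hB: "\<exists>h>0. h < d \<and> A < B - h \<and> B - h < B" if "d > 0" for d
    using AB that by (intro exI[of _ "min (d/2) ((B-A)/2)"]) (auto simp: min_def field_simps)
  have "f1 m \<noteq> 0" using no m by blast
  then consider "f1 m > 0" | "f1 m < 0" by linarith
  thus ?thesis
  proof cases
    case 1
    have tp: "\<And>t. A < t \<Longrightarrow> t < B \<Longrightarrow> f1 t > 0" using same 1 by (simp add: zero_less_mult_iff)
    have "f2 A > 0"
    proof (rule ccontr)
      assume "\<not> f2 A > 0"
      hence "f2 A < 0" using pA by (cases "f2 A = 0") auto
      then obtain d where d: "d > 0" "\<forall>h>0. h < d \<longrightarrow> f1 A > f1 (A + h)" 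
        using DERIV_neg_dec_right[OF d2[of A]] by blast
      obtain h where "h > 0" "h < d" "A < A + h" "A + h < B" using hA[OF d(1)] by blast
      thus False using d tp[of "A+h"] A1 by auto
    qed
    moreover have "f2 B < 0"
    proof (rule ccontr)
      assume "\<not> f2 B < 0"
      hence "f2 B > 0" using pB by (cases "f2 B = 0") auto
      then obtain d where d: "d > 0" "\<forall>h>0. h < d \<longrightarrow> f1 (B - h) < f1 B" 
        using DERIV_pos_inc_left[OF d2[of B]] by blast
      obtain h where "h > 0" "h < d" "A < B - h" "B - h < B" using hB[OF d(1)] by blast
      thus False using d tp[of "B-h"] B1 by auto
    qed
    ultimately have "f A < 0" "f B > 0" using pA pB by (auto simp: mult_less_0_iff)
    thus ?thesis by (simp add: mult_neg_pos)
  next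
    case 2
    have tp: "\<And>t. A < t \<Longrightarrow> t < B \<Longrightarrow> f1 t < 0" using same 2 by (simp add: zero_less_mult_iff)
    have "f2 A < 0"
    proof (rule ccontr)
      assume "\<not> f2 A < 0"
      hence "f2 A > 0" using pA by (cases "f2 A = 0") auto
      then obtain d where d: "d > 0" "\<forall>h>0. h < d \<longrightarrow> f1 A < f1 (A + h)" 
        using DERIV_pos_inc_right[OF d2[of A]] by blast
      obtain h where "h > 0" "h < d" "A < A + h" "A + h < B" using hA[OF d(1)] by blast
      thus False using d tp[of "A+h"] A1 by auto
    qed
    moreover have "f2 B > 0"
    proof (rule ccontr)
      assume "\<not> f2 B > 0"
      hence "f2 B < 0" using pB by (cases "f2 B = 0") auto
      then obtain d where d: "d > 0" "\<forall>h>0. h < d \<longrightarrow> f1 (B - h) > f1 B" 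
        using DERIV_neg_dec_left[OF d2[of B]] by blast
      obtain h where "h > 0" "h < d" "A < B - h" "B - h < B" using hB[OF d(1)] by blast
      thus False using d tp[of "B-h"] B1 by auto
    qed
    ultimately have "f A > 0" "f B < 0" using pA pB by (auto simp: mult_less_0_iff)
    thus ?thesis by (simp add: mult_pos_neg)
  qed
qed

lemma seq_exists: "\<exists>y. strict_mono y \<and> range y = Cset \<and> (\<forall>t\<in>Cset. y 0 \<le> t) \<and>
   (\<forall>k t. y k < t \<and> t < y (Suc k) \<longrightarrow> t \<notin> Cset)"
proof -
  define nx where "nx = (\<lambda>a. Inf (Cset \<inter> {a<..}))"
  define y where "y = (\<lambda>k. (nx ^^ Suc k) 1)"
  have y0: "y 0 = nx 1" and yS: "\<And>k. y (Suc k) = nx (y k)" by (simp_all add: y_def)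
  have yC: "y k \<in> Cset" for k
  proof (induction k)
    case 0 show ?case using next_C[of 1] y0 unfolding nx_def by simp
  next
    case (Suc k)
    hence "y k \<ge> 1" unfolding Cset_def by simp
    thus ?case using next_C[of "y k"] yS unfolding nx_def by simp
  qed
  have y1: "y k > 1" for k using yC[of k] unfolding Cset_def by simp
  have step: "y k < y (Suc k)" "\<forall>t\<in>Cset. y k < t \<longrightarrow> y (Suc k) \<le> t" for k
    using next_C[of "y k"] y1[of k] yS[of k] unfolding nx_def by auto
  have first: "\<forall>t\<in>Cset. y 0 \<le> t" using next_C[of 1] y0 unfolding nx_def Cset_def by auto
  have sm: "strict_mono y" using step(1) by (simp add: strict_mono_Suc_iff)
  have gap: "\<forall>k t. y k < t \<and> t < y (Suc k) \<longrightarrow> t \<notin> Cset" using step(2) by force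
  have unb: "\<exists>k. t \<le> y k" for t
  proof (rule ccontr)
    assume nk: "\<nexists>k. t \<le> y k"
    have lt: "y k < t" for k using nk by (meson not_le)
    have bdd: "bdd_above (range y)" using lt by (intro bdd_aboveI[of _ t]) (auto intro: less_imp_le)
    have inc: "incseq y" using step(1) by (intro incseq_SucI less_imp_le)
    define L where "L = (SUP k. y k)"
    have lim: "y \<longlonglongrightarrow> L" unfolding L_def by (rule LIMSEQ_incseq_SUP[OF bdd inc])
    have yL: "y k \<le> L" for k unfolding L_def using cSUP_upper[of k UNIV y] bdd by simp
    have yL': "y k < L" for k using step(1)[of k] yL[of "Suc k"] by simp
    have "(\<lambda>k. f1 (y k)) \<longlonglongrightarrow> f1 L" by (rule isCont_tendsto_compose[OF DERIV_isCont[OF d2] lim])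
    moreover have "(\<lambda>k. f1 (y k)) = (\<lambda>k. 0)" using yC unfolding Cset_def by auto
    ultimately have fL: "f1 L = 0" using LIMSEQ_unique tendsto_const by metis
    have L1: "L > 1" using y1[of 0] yL[of 0] by simp
    obtain \<delta> where \<delta>: "\<delta> > 0" "\<forall>z. z \<noteq> L \<and> \<bar>z - L\<bar> < \<delta> \<longrightarrow> f1 z \<noteq> 0" using crit_iso[OF L1 fL] by blast
    obtain n where "\<forall>k\<ge>n. norm (y k - L) < \<delta>" using lim \<delta>(1) unfolding LIMSEQ_iff by blast
    hence "\<bar>y n - L\<bar> < \<delta>" by simp
    moreover have "y n \<noteq> L" using yL'[of n] by simp
    ultimately have "f1 (y n) \<noteq> 0" using \<delta> by blast
    thus False using yC[of n] unfolding Cset_def by simp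
  qed
  have "range y = Cset"
  proof
    show "range y \<subseteq> Cset" using yC by auto
    show "Cset \<subseteq> range y"
    proof
      fix t assume tC: "t \<in> Cset"
      obtain k where k: "t \<le> y k" "\<forall>j<k. \<not> t \<le> y j" using unb[of t] exists_least_iff[of "\<lambda>k. t \<le> y k"] by blast
      show "t \<in> range y"
      proof (cases k)
        case 0 
        hence "t = y 0" using first tC k by (simp add: order_antisym)
        thus ?thesis by simp
      next
        case (Suc j)
        hence "y j < t" using k by auto
        hence "y (Suc j) \<le> t" using step(2) tC by blast
        hence "t = y k" using k Suc by simp
        thus ?thesis by simp
      qed
    qed
  qed
  thus ?thesis using sm first gap by blast
qed

lemma main_pos: "\<exists>x y :: nat \<Rightarrow> real.
           strict_mono x \<and> strict_mono y \<and>
           range x = {t. t > 1 \<and> f t = 0} \<and>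
           range y = {t. t > 1 \<and> f1 t = 0} \<and>
           1 < sqrt chi / c \<and> sqrt chi / c < y 0 \<and>
           (\<forall>k. y k < x k \<and> x k < y (Suc k))"
proof -
  obtain y where sm: "strict_mono y" and ry: "range y = Cset" and first: "\<forall>t\<in>Cset. y 0 \<le> t"
    and gap: "\<forall>k t. y k < t \<and> t < y (Suc k) \<longrightarrow> t \<notin> Cset" using seq_exists by blast
  have yC: "y k \<in> Cset" for k using ry by auto
  have y1: "y k > 1" "f1 (y k) = 0" for k using yC[of k] unfolding Cset_def by auto
  have ylt: "y k < y (Suc k)" for k using sm by (simp add: strict_mono_Suc_iff)
  have noc: "\<And>t. y k < t \<Longrightarrow> t < y (Suc k) \<Longrightarrow> f1 t \<noteq> 0" for k
    using gap y1 unfolding Cset_def by (metis (mono_tags, lifting) less_trans mem_Collect_eq)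
  have exz: "\<exists>z. y k < z \<and> z < y (Suc k) \<and> f z = 0" for k
  proof -
    have "f (y k) * f (y (Suc k)) < 0" by (rule between_sign[OF yC yC ylt noc])
    then obtain z where z: "y k \<le> z" "z \<le> y (Suc k)" "f z = 0"
      using ivt_zero[OF contf less_imp_le[OF ylt[of k]]] by auto
    have "z \<noteq> y k" "z \<noteq> y (Suc k)" using z no_common y1 by metis+
    thus ?thesis using z by (intro exI[of _ z]) auto
  qed
  define x where "x = (\<lambda>k. SOME z. y k < z \<and> z < y (Suc k) \<and> f z = 0)"
  have xk: "y k < x k \<and> x k < y (Suc k) \<and> f (x k) = 0" for k
    unfolding x_def by (rule someI_ex[OF exz])
  have uniq: "z = x k" if z: "y k < z" "z < y (Suc k)" "f z = 0" for z k
  proof (rule ccontr)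
    assume ne: "z \<noteq> x k"
    define a where "a = min z (x k)"
    define b where "b = max z (x k)"
    have ab: "a < b" unfolding a_def b_def using ne by (auto simp: min_def max_def)
    obtain w where w: "a < w" "w < b" "f b - f a = (b - a) * f1 w" using mvt[OF ab d1] by blast
    have "f a = 0" "f b = 0" unfolding a_def b_def using z xk[of k] by (auto simp: min_def max_def)
    hence "f1 w = 0" using w ab by simp
    moreover have "y k < w" "w < y (Suc k)" using w z xk[of k] unfolding a_def b_def by auto
    ultimately show False using noc by blast
  qed
  have pos_before: "f t > 0" if t: "1 \<le> t" "t \<le> y 0" for t
  proof -
    have f1p: "f1 s > 0" if s: "1 \<le> s" "s < y 0" for s
    proof (rule ccontr)
      assume "\<not> f1 s > 0"
      hence "f1 1 * f1 s \<le> 0" using f1_1 by (simp add: mult_le_0_iff)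
      then obtain z where z: "1 \<le> z" "z \<le> s" "f1 z = 0" using ivt_zero[OF contf1 s(1)] by auto
      have "z \<noteq> 1" using z f1_1 by auto
      hence "z \<in> Cset" using z unfolding Cset_def by auto
      thus False using first z s by force
    qed
    show ?thesis
    proof (cases "t = 1")
      case True thus ?thesis using pos by simp
    next
      case False
      hence t1: "1 < t" using t by simp
      obtain w where w: "1 < w" "w < t" "f t - f 1 = (t - 1) * f1 w" using mvt[OF t1 d1] by blast
      have "f1 w > 0" using f1p[of w] w t by simp
      hence "f t - f 1 > 0" using w t1 by simp
      thus ?thesis using pos by simp
    qed
  qed
  have rx: "range x = {t. t > 1 \<and> f t = 0}"
  proof
    show "range x \<subseteq> {t. t > 1 \<and> f t = 0}" using xk y1 by (force intro: less_trans)
    show "{t. t > 1 \<and> f t = 0} \<subseteq> range x"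
    proof
      fix z assume "z \<in> {t. t > 1 \<and> f t = 0}"
      hence z: "z > 1" "f z = 0" by auto
      have zy0: "\<not> z \<le> y 0" using pos_before[of z] z by auto
      obtain b where "b \<in> Cset" "b > z" using C_unbounded by blast
      then obtain kb where "z \<le> y kb" using ry by (metis less_imp_le rangeE)
      then obtain k where k: "z \<le> y k" "\<forall>j<k. \<not> z \<le> y j" using exists_least_iff[of "\<lambda>k. z \<le> y k"] by blast
      obtain j where j: "k = Suc j" using k zy0 by (cases k) auto
      have "y j < z" using k j by auto
      moreover have "z \<noteq> y (Suc j)" using no_common[of z] z y1 by metis
      ultimately have "z = x j" using uniq[of j z] k j z by simp
      thus "z \<in> range x" by simp
    qed
  qed
  have smx: "strict_mono x" unfolding strict_mono_Suc_iff using xk by (meson less_trans)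
  have "sc < y 0" using crit_props(1)[OF y1(1) y1(2)] by simp
  moreover have "1 < sc" by (rule sc_gt1)
  moreover have "range y = {t. t > 1 \<and> f1 t = 0}" using ry unfolding Cset_def .
  ultimately show ?thesis using smx sm rx xk unfolding sc_def by blast
qed
end



definition Gk :: "real \<Rightarrow> (real \<Rightarrow> real) \<Rightarrow> nat \<Rightarrow> real \<Rightarrow> complex" where
 "Gk c \<phi> k x = integral {-1..1} (\<lambda>t. of_real (\<phi> t) * (\<i> * of_real (c*t))^k * exp (\<i> * of_real (c*x*t)))"

lemma Gk_deriv:
  assumes cf: "continuous_on UNIV \<phi>"
  shows "(Gk c \<phi> k has_vector_derivative Gk c \<phi> (Suc k) x) (at x)"
proof -
  define F where "F = (\<lambda>x t. of_real (\<phi> t) * (\<i> * of_real (c*t))^k * exp (\<i> * of_real (c*x*t)))"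
  define F' where "F' = (\<lambda>x t. of_real (\<phi> t) * (\<i> * of_real (c*t))^Suc k * exp (\<i> * of_real (c*x*t)))"
  have fx: "((\<lambda>x. F x t) has_vector_derivative F' x t) (at x within UNIV)" for x t
  proof -
    define \<Psi> where "\<Psi> = (\<lambda>z. of_real (\<phi> t) * (\<i> * of_real (c*t))^k * exp (\<i> * of_real (c*t) * z))"
    have "(\<Psi> has_field_derivative (of_real (\<phi> t) * (\<i> * of_real (c*t))^k * (exp (\<i> * of_real (c*t) * of_real x) * (\<i> * of_real (c*t))))) (at (of_real x))"
      unfolding \<Psi>_def by (rule derivative_eq_intros refl)+ simp
    hence "((\<lambda>x. \<Psi> (of_real x)) has_vector_derivative (of_real (\<phi> t) * (\<i> * of_real (c*t))^k * (exp (\<i> * of_real (c*t) * of_real x) * (\<i> * of_real (c*t))))) (at x within UNIV)"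
      by (rule has_vector_derivative_real_field)
    moreover have "(\<lambda>x. \<Psi> (of_real x)) = (\<lambda>x. F x t)" unfolding \<Psi>_def F_def
      by (auto simp: algebra_simps)
    moreover have "of_real (\<phi> t) * (\<i> * of_real (c*t))^k * (exp (\<i> * of_real (c*t) * of_real x) * (\<i> * of_real (c*t))) = F' x t"
      unfolding F'_def by (simp add: algebra_simps)
    ultimately show ?thesis by simp
  qed
  have cF: "continuous_on (UNIV \<times> cbox (-1) 1) (\<lambda>(x, t). F' x t)"
    unfolding F'_def split_beta
    by (intro continuous_intros continuous_on_compose2[OF cf]) auto
  have intF: "F x integrable_on cbox (-1) 1" for x
    unfolding F_def cbox_interval
    by (intro integrable_continuous_interval continuous_intros continuous_on_compose2[OF cf]) auto
  have "((\<lambda>x. integral (cbox (-1) 1) (F x)) has_vector_derivative integral (cbox (-1) 1) (F' x)) (at x within UNIV)"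
    by (rule leibniz_rule_vector_derivative[OF fx intF cF]) auto
  thus ?thesis unfolding Gk_def F_def F'_def cbox_interval by simp
qed

lemma Gk_zero:
  assumes cf: "continuous_on UNIV \<phi>" and z: "\<And>x. Gk c \<phi> 0 x = 0"
  shows "Gk c \<phi> k x = 0"
proof (induction k arbitrary: x)
  case 0 thus ?case using z by simp
next
  case (Suc k)
  have "(Gk c \<phi> k has_vector_derivative 0) (at x)"
  proof -
    have "Gk c \<phi> k = (\<lambda>x. 0)" using Suc by auto
    thus ?thesis by simp
  qed
  thus ?case using vector_derivative_unique_at[OF Gk_deriv[OF cf]] by metis
qed

lemma moments_zero:
  assumes cf: "continuous_on UNIV \<phi>" and c: "c \<noteq> 0" and z: "\<And>x. fin_fourier c \<phi> x = 0"
  shows "integral {-1..1} (\<lambda>t. \<phi> t * t^k) = 0"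
proof -
  have "Gk c \<phi> 0 x = fin_fourier c \<phi> x" for x unfolding Gk_def fin_fourier_def by simp
  hence "Gk c \<phi> k 0 = 0" using Gk_zero[OF cf] z by simp
  moreover have "Gk c \<phi> k 0 = (\<i> * of_real c)^k * of_real (integral {-1..1} (\<lambda>t. \<phi> t * t^k))"
  proof -
    have "(\<lambda>t. \<phi> t * t^k) integrable_on {-1..1}"
      by (intro integrable_continuous_interval continuous_intros continuous_on_subset[OF cf]) auto
    hence "((\<lambda>t. of_real (\<phi> t * t^k)::complex) has_integral of_real (integral {-1..1} (\<lambda>t. \<phi> t * t^k))) {-1..1}"
      by (intro has_integral_of_real) auto
    hence "integral {-1..1} (\<lambda>t. of_real (\<phi> t * t^k)::complex) = of_real (integral {-1..1} (\<lambda>t. \<phi> t * t^k))"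
      by (rule integral_unique)
    moreover have "Gk c \<phi> k 0 = (\<i> * of_real c)^k * integral {-1..1} (\<lambda>t. of_real (\<phi> t * t^k)::complex)"
    proof -
      have "(\<lambda>t. of_real (\<phi> t) * (\<i> * of_real (c*t))^k * exp (\<i> * of_real (c*0*t))) = (\<lambda>t. (\<i> * of_real c)^k * (of_real (\<phi> t * t^k)::complex))"
        by (auto simp: fun_eq_iff power_mult_distrib mult_ac)
      thus ?thesis unfolding Gk_def by simp
    qed
    ultimately show ?thesis by simp
  qed
  ultimately show ?thesis using c by simp
qed


lemma moments_contra:
  fixes \<phi> :: "real \<Rightarrow> real"
  assumes cf: "continuous_on UNIV \<phi>" and m: "\<And>k. integral {-1..1} (\<lambda>t. \<phi> t * t^k) = 0"
    and nrm: "integral {-1..1} (\<lambda>t. \<phi> t * \<phi> t) = 1"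
  shows False
proof -
  have cI: "continuous_on {-1..1} \<phi>" using continuous_on_subset[OF cf] by auto
  have cpt: "compact {-1..(1::real)}" by (rule compact_Icc)
  have "bounded (\<phi> ` {-1..1})" by (intro compact_imp_bounded compact_continuous_image[OF cI cpt])
  then obtain M where M: "M > 0" "\<And>t. t \<in> {-1..1} \<Longrightarrow> \<bar>\<phi> t\<bar> \<le> M" unfolding bounded_pos by auto
  define e where "e = 1/(4*M)"
  have e: "e > 0" unfolding e_def using M by simp
  obtain g where g: "real_polynomial_function g" "\<And>t. t \<in> {-1..1} \<Longrightarrow> \<bar>\<phi> t - g t\<bar> < e"
    using Stone_Weierstrass_real_polynomial_function[OF compact_Icc cI e] by blast
  obtain a n0 where gs: "g = (\<lambda>x. \<Sum>i\<le>n0. a i * x^i)" using g(1) real_polynomial_function_iff_sum by blast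
  have intk: "(\<lambda>t. a i * (\<phi> t * t^i)) integrable_on {-1..1}" for i
    by (intro integrable_continuous_interval continuous_intros cI)
  have "integral {-1..1} (\<lambda>t. \<phi> t * g t) = integral {-1..1} (\<lambda>t. \<Sum>i\<le>n0. a i * (\<phi> t * t^i))"
    unfolding gs by (simp add: sum_distrib_left mult_ac)
  also have "\<dots> = (\<Sum>i\<le>n0. integral {-1..1} (\<lambda>t. a i * (\<phi> t * t^i)))"
    by (rule integral_sum) (auto intro: intk)
  also have "\<dots> = 0" using m by simp
  finally have pg: "integral {-1..1} (\<lambda>t. \<phi> t * g t) = 0" .
  have cg: "continuous_on {-1..1} g" unfolding gs by (intro continuous_intros)
  have i1: "(\<lambda>t. \<phi> t * \<phi> t) integrable_on {-1..1}" by (intro integrable_continuous_interval continuous_intros cI)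
  have i2: "(\<lambda>t. \<phi> t * g t) integrable_on {-1..1}" by (intro integrable_continuous_interval continuous_intros cI cg)
  have "integral {-1..1} (\<lambda>t. \<phi> t * \<phi> t - \<phi> t * g t) = 1"
    using integral_diff[OF i1 i2] nrm pg by simp
  moreover have hi: "((\<lambda>t. \<phi> t * \<phi> t - \<phi> t * g t) has_integral integral {-1..1} (\<lambda>t. \<phi> t * \<phi> t - \<phi> t * g t)) (cbox (-1) 1)"
    using integrable_integral[OF integrable_diff[OF i1 i2]] by (simp add: cbox_interval)
  moreover have "norm (integral {-1..1} (\<lambda>t. \<phi> t * \<phi> t - \<phi> t * g t)) \<le> (M*e) * Henstock_Kurzweil_Integration.content (cbox (-1::real) 1)"
  proof (rule has_integral_bound[OF _ hi])
    show "0 \<le> M*e" using M e by simp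
    fix t :: real assume t: "t \<in> cbox (-1) 1"
    have "norm (\<phi> t * \<phi> t - \<phi> t * g t) = \<bar>\<phi> t\<bar> * \<bar>\<phi> t - g t\<bar>" by (simp add: abs_mult right_diff_distrib[symmetric])
    also have "\<dots> \<le> M * e" using M(2)[of t] g(2)[of t] t by (intro mult_mono) (auto simp: cbox_interval)
    finally show "norm (\<phi> t * \<phi> t - \<phi> t * g t) \<le> M * e" .
  qed
  moreover have "(M*e) * Henstock_Kurzweil_Integration.content (cbox (-1::real) 1) = 1/2" unfolding e_def using M by (simp add: cbox_interval)
  ultimately show False by simp
qed

theorem theorem29:
  fixes c chi :: real and n :: nat and lam :: "nat \<Rightarrow> complex" and Psi :: "nat \<Rightarrow> real \<Rightarrow> real"
  assumes "c > 0"
    and "pswf_system c lam Psi"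
    and "chi > 0"
    and "prolate_ode c chi (Psi n)"
    and "chi > c\<^sup>2"
  shows "\<exists>x y :: nat \<Rightarrow> real.
           strict_mono x \<and> strict_mono y \<and>
           range x = {t. t > 1 \<and> Psi n t = 0} \<and>
           range y = {t. t > 1 \<and> deriv (Psi n) t = 0} \<and>
           1 < sqrt chi / c \<and> sqrt chi / c < y 0 \<and>
           (\<forall>k. y k < x k \<and> x k < y (Suc k))"
proof -
  define \<psi> where "\<psi> = Psi n"
  define L where "L = lam n"
  have cont: "continuous_on UNIV \<psi>" using assms(2) unfolding pswf_system_def \<psi>_def by blast
  have eig: "\<And>x. L * of_real (\<psi> x) = fin_fourier c \<psi> x" using assms(2) unfolding pswf_system_def \<psi>_def L_def by blast
  have nrm: "integral {-1..1} (\<lambda>t. \<psi> t * \<psi> t) = 1" using assms(2) unfolding pswf_system_def \<psi>_def by auto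
  have c0: "c \<noteq> 0" using assms(1) by simp
  have L0: "L \<noteq> 0"
  proof
    assume "L = 0"
    hence "\<And>x. fin_fourier c \<psi> x = 0" using eig by (metis mult_zero_left)
    hence "\<And>k. integral {-1..1} (\<lambda>t. \<psi> t * t^k) = 0" using moments_zero[OF cont c0] by blast
    thus False using moments_contra[OF cont _ nrm] by blast
  qed
  have G0: "\<And>x. Gk c \<psi> 0 x = fin_fourier c \<psi> x" unfolding Gk_def fin_fourier_def by simp
  have psi_eq: "\<psi> = (\<lambda>x. Re (Gk c \<psi> 0 x / L))"
  proof
    fix x
    have "of_real (\<psi> x) = Gk c \<psi> 0 x / L" using eig[of x] G0[of x] L0 by (simp add: field_simps)
    thus "\<psi> x = Re (Gk c \<psi> 0 x / L)" by (metis Re_complex_of_real)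
  qed
  define f1 where "f1 = (\<lambda>x. Re (Gk c \<psi> (Suc 0) x / L))"
  define f2 where "f2 = (\<lambda>x. Re (Gk c \<psi> (Suc (Suc 0)) x / L))"
  have dk: "((\<lambda>x. Re (Gk c \<psi> k x / L)) has_real_derivative Re (Gk c \<psi> (Suc k) x / L)) (at x)" for k x
    by (intro has_field_derivative_Re has_vector_derivative_divide Gk_deriv[OF cont])
  have d1: "(\<psi> has_real_derivative f1 x) (at x)" for x
    unfolding f1_def by (subst psi_eq) (rule dk)
  have d2: "(f1 has_real_derivative f2 x) (at x)" for x
    unfolding f1_def f2_def by (rule dk)
  have dpsi: "deriv \<psi> = f1" using d1 DERIV_imp_deriv by blast
  have dpsi2: "deriv f1 = f2" using d2 DERIV_imp_deriv by blast
  have ode: "\<And>x. (1 - x^2) * f2 x - 2*x*f1 x + (chi - c^2*x^2) * \<psi> x = 0"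
    using assms(4) unfolding prolate_ode_def \<psi>_def[symmetric] dpsi dpsi2 by blast
  interpret S: ode_setup c chi \<psi> f1 f2
    by unfold_locales (use assms(1,5) d1 d2 ode in auto)
  consider "\<psi> 1 = 0" | "\<psi> 1 > 0" | "\<psi> 1 < 0" by linarith
  thus ?thesis
  proof cases
    case 1
    have "integral {-1..1} (\<lambda>t. \<psi> t * \<psi> t) = integral {-1<..<1} (\<lambda>t. \<psi> t * \<psi> t)"
      by (rule integral_open_interval_real)
    also have "\<dots> = integral {-1<..<1} (\<lambda>t::real. 0::real)"
      by (rule Henstock_Kurzweil_Integration.integral_cong) (use S.zero_case[OF 1] in auto)
    finally show ?thesis using nrm by simp
  next
    case 2
    interpret P: ode_pos c chi \<psi> f1 f2 by unfold_locales (rule 2)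
    show ?thesis using P.main_pos unfolding \<psi>_def[symmetric] dpsi .
  next
    case 3
    interpret P: ode_pos c chi "\<lambda>x. - \<psi> x" "\<lambda>x. - f1 x" "\<lambda>x. - f2 x"
    proof unfold_locales
      show "((\<lambda>x. - \<psi> x) has_real_derivative - f1 x) (at x)" for x using d1 by (intro DERIV_minus)
      show "((\<lambda>x. - f1 x) has_real_derivative - f2 x) (at x)" for x using d2 by (intro DERIV_minus)
      show "(1 - x^2) * - f2 x - 2*x* - f1 x + (chi - c^2*x^2) * - \<psi> x = 0" for x
        using ode[of x] by (simp add: algebra_simps)
      show "- \<psi> 1 > 0" using 3 by simp
    qed (use assms(1,5) in auto)
    show ?thesis using P.main_pos unfolding \<psi>_def[symmetric] dpsi by simp
  qed
qed

end
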